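(* $D(18,\{3,4\})\ge 30$; equivalently, every $\{K_3,K_4\}$-decomposition of $K_{18}$ has $\alpha\ge 9$.
   Context: A $\{K_3,K_4\}$-decomposition of $K_v$ is a collection of subgraphs, each isomorphic to $K_3$ or $K_4$, such that every edge of $K_v$ lies in exactly one of them. $\alpha$ and $\beta$ denote the numbers of copies of $K_3$ and $K_4$ in the decomposition (so $3\alpha+6\beta=\binom{v}{2}$). $D(v,\{3,4\})$ is the minimum of $\alpha+\beta$ over all such decompositions of $K_v$. *)

theory Defs
  imports Main
begin

text \<open>A copy of K_k is identified with
its k-element vertex set (a block).\<close>

definition is_decomp :: "nat \<Rightarrow> nat set \<Rightarrow> nat set set \<Rightarrow> bool" where
  "is_decomp v K B \<longleftrightarrow>
     (\<forall>b\<in>B. b \<subseteq> {..<v} \<and> card b \<in> K) \<and>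
     (\<forall>x<v. \<forall>y<v. x \<noteq> y \<longrightarrow> (\<exists>!b. b \<in> B \<and> x \<in> b \<and> y \<in> b))"

definition D :: "nat \<Rightarrow> nat set \<Rightarrow> nat" where
  "D v K = Inf (card ` {B. is_decomp v K B})"

end

theory Submission
  imports Defs
begin


definition blk_ok :: "nat list \<Rightarrow> bool" where
  "blk_ok b \<longleftrightarrow> distinct b \<and> (length b = 3 \<or> length b = 4) \<and> list_all (\<lambda>x. x < 18) b"

definition star :: "nat list list \<Rightarrow> nat \<Rightarrow> nat list" where
  "star L x = concat (map (remove1 x) (filter (\<lambda>b. x \<in> set b) L))"

definition vx_ok :: "nat list list \<Rightarrow> nat \<Rightarrow> bool" where
  "vx_ok L x \<longleftrightarrow> (let s = star L x in distinct s \<and> length s = 17 \<and> list_all (\<lambda>y. y < 18 \<and> y \<noteq> x) s)"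

lemma sound:
  assumes "list_all blk_ok L" "list_all (vx_ok L) [0..<18]"
  shows "is_decomp 18 {3,4} (set (map set L))"
  unfolding is_decomp_def
proof (intro conjI allI impI)
  show "\<forall>b\<in>set (map set L). b \<subseteq> {..<18} \<and> card b \<in> {3, 4}"
    using assms(1) by (auto simp: list_all_iff blk_ok_def distinct_card)
next
  fix x y :: nat assume xy: "x < 18" "y < 18" "x \<noteq> y"
  let ?s = "star L x"
  have xs: "x \<in> set [0..<18]" using xy(1) by (simp only: set_upt atLeastLessThan_iff) simp
  have vv: "vx_ok L x" using assms(2) xs unfolding list_all_iff by blast
  have v: "distinct ?s" "length ?s = 17" "set ?s \<subseteq> {..<18} - {x}"
    using vv unfolding vx_ok_def Let_def list_all_iff by auto
  have "card (set ?s) = 17" using distinct_card[OF v(1)] v(2) by simp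
  moreover have "card ({..<18::nat} - {x}) = 17" using xy(1) by simp
  ultimately have "set ?s = {..<18} - {x}" by (intro card_subset_eq[OF _ v(3)]) simp_all
  hence "y \<in> set ?s" using xy by auto
  then obtain l where lL: "l \<in> set L" "x \<in> set l" "y \<in> set l" using xy(3) by (auto simp: star_def in_set_remove1)
  have dl: "\<And>l. l \<in> set L \<Longrightarrow> distinct l" using assms(1) by (auto simp: list_all_iff blk_ok_def)
  show "\<exists>!b. b \<in> set (map set L) \<and> x \<in> b \<and> y \<in> b"
  proof (rule ex1I[of _ "set l"])
    show "set l \<in> set (map set L) \<and> x \<in> set l \<and> y \<in> set l" using lL by auto
  next
    fix b assume "b \<in> set (map set L) \<and> x \<in> b \<and> y \<in> b"
    then obtain l' where l': "l' \<in> set L" "b = set l'" "x \<in> set l'" "y \<in> set l'" by auto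
    show "b = set l"
    proof (rule ccontr)
      assume ne: "b \<noteq> set l"
      have s1: "set (remove1 x l) = set l - {x}" using dl[OF lL(1)] by (rule set_remove1_eq)
      have s2: "set (remove1 x l') = set l' - {x}" using dl[OF l'(1)] by (rule set_remove1_eq)
      have "remove1 x l \<noteq> remove1 x l'"
      proof
        assume "remove1 x l = remove1 x l'"
        hence "set l - {x} = set l' - {x}" using s1 s2 by simp
        hence "set l = set l'" using lL(2) l'(3) by blast
        thus False using ne l'(2) by simp
      qed
      moreover have "remove1 x l \<in> set (map (remove1 x) (filter (\<lambda>b. x \<in> set b) L))" using lL by auto
      moreover have "remove1 x l' \<in> set (map (remove1 x) (filter (\<lambda>b. x \<in> set b) L))" using l' by auto
      moreover have "\<forall>ys zs. ys \<in> set (map (remove1 x) (filter (\<lambda>b. x \<in> set b) L)) \<and> zs \<in> set (map (remove1 x) (filter (\<lambda>b. x \<in> set b) L)) \<and> ys \<noteq> zs \<longrightarrow> set ys \<inter> set zs = {}"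
        using v(1) unfolding star_def distinct_concat_iff by (elim conjE) assumption
      ultimately have "set (remove1 x l) \<inter> set (remove1 x l') = {}" by blast
      thus False using s1 s2 lL l' xy by blast
    qed
  qed
qed

definition LL :: "nat list list" where "LL = [[0, 1, 4, 15], [0, 2, 10, 13], [0, 3, 6, 14], [0, 5, 9, 17], [0, 7, 11, 16], [0, 8, 12], [1, 2, 7, 8], [1, 3, 13, 17], [1, 5, 6, 10], [1, 9, 11, 14], [1, 12, 16], [2, 3, 9, 15], [3, 5, 7, 12], [3, 8, 10, 11], [3, 4, 16], [9, 10, 16], [7, 9, 13], [6, 8, 9], [4, 9, 12], [4, 6, 7], [4, 10, 14], [7, 10, 17], [7, 14, 15], [10, 12, 15], [4, 8, 13], [4, 5, 11], [2, 4, 17], [2, 5, 16], [2, 12, 14], [2, 6, 11], [5, 8, 15], [5, 13, 14], [6, 12, 17], [11, 12, 13], [11, 15, 17], [6, 13, 15, 16], [8, 14, 16, 17]]"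

lemma star0: "star LL 0 = [1, 4, 15, 2, 10, 13, 3, 6, 14, 5, 9, 17, 7, 11, 16, 8, 12]" unfolding LL_def star_def by simp
lemma star1: "star LL 1 = [0, 4, 15, 2, 7, 8, 3, 13, 17, 5, 6, 10, 9, 11, 14, 12, 16]" unfolding LL_def star_def by simp
lemma star2: "star LL 2 = [0, 10, 13, 1, 7, 8, 3, 9, 15, 4, 17, 5, 16, 12, 14, 6, 11]" unfolding LL_def star_def by simp
lemma star3: "star LL 3 = [0, 6, 14, 1, 13, 17, 2, 9, 15, 5, 7, 12, 8, 10, 11, 4, 16]" unfolding LL_def star_def by simp
lemma star4: "star LL 4 = [0, 1, 15, 3, 16, 9, 12, 6, 7, 10, 14, 8, 13, 5, 11, 2, 17]" unfolding LL_def star_def by simp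
lemma star5: "star LL 5 = [0, 9, 17, 1, 6, 10, 3, 7, 12, 4, 11, 2, 16, 8, 15, 13, 14]" unfolding LL_def star_def by simp
lemma star6: "star LL 6 = [0, 3, 14, 1, 5, 10, 8, 9, 4, 7, 2, 11, 12, 17, 13, 15, 16]" unfolding LL_def star_def by simp
lemma star7: "star LL 7 = [0, 11, 16, 1, 2, 8, 3, 5, 12, 9, 13, 4, 6, 10, 17, 14, 15]" unfolding LL_def star_def by simp
lemma star8: "star LL 8 = [0, 12, 1, 2, 7, 3, 10, 11, 6, 9, 4, 13, 5, 15, 14, 16, 17]" unfolding LL_def star_def by simp
lemma star9: "star LL 9 = [0, 5, 17, 1, 11, 14, 2, 3, 15, 10, 16, 7, 13, 6, 8, 4, 12]" unfolding LL_def star_def by simp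
lemma star10: "star LL 10 = [0, 2, 13, 1, 5, 6, 3, 8, 11, 9, 16, 4, 14, 7, 17, 12, 15]" unfolding LL_def star_def by simp
lemma star11: "star LL 11 = [0, 7, 16, 1, 9, 14, 3, 8, 10, 4, 5, 2, 6, 12, 13, 15, 17]" unfolding LL_def star_def by simp
lemma star12: "star LL 12 = [0, 8, 1, 16, 3, 5, 7, 4, 9, 10, 15, 2, 14, 6, 17, 11, 13]" unfolding LL_def star_def by simp
lemma star13: "star LL 13 = [0, 2, 10, 1, 3, 17, 7, 9, 4, 8, 5, 14, 11, 12, 6, 15, 16]" unfolding LL_def star_def by simp
lemma star14: "star LL 14 = [0, 3, 6, 1, 9, 11, 4, 10, 7, 15, 2, 12, 5, 13, 8, 16, 17]" unfolding LL_def star_def by simp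
lemma star15: "star LL 15 = [0, 1, 4, 2, 3, 9, 7, 14, 10, 12, 5, 8, 11, 17, 6, 13, 16]" unfolding LL_def star_def by simp
lemma star16: "star LL 16 = [0, 7, 11, 1, 12, 3, 4, 9, 10, 2, 5, 6, 13, 15, 8, 14, 17]" unfolding LL_def star_def by simp
lemma star17: "star LL 17 = [0, 5, 9, 1, 3, 13, 7, 10, 2, 4, 6, 12, 11, 15, 8, 14, 16]" unfolding LL_def star_def by simp
lemma vx0: "vx_ok LL 0" unfolding vx_ok_def Let_def star0 by simp
lemma vx1: "vx_ok LL 1" unfolding vx_ok_def Let_def star1 by simp
lemma vx2: "vx_ok LL 2" unfolding vx_ok_def Let_def star2 by simp
lemma vx3: "vx_ok LL 3" unfolding vx_ok_def Let_def star3 by simp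
lemma vx4: "vx_ok LL 4" unfolding vx_ok_def Let_def star4 by simp
lemma vx5: "vx_ok LL 5" unfolding vx_ok_def Let_def star5 by simp
lemma vx6: "vx_ok LL 6" unfolding vx_ok_def Let_def star6 by simp
lemma vx7: "vx_ok LL 7" unfolding vx_ok_def Let_def star7 by simp
lemma vx8: "vx_ok LL 8" unfolding vx_ok_def Let_def star8 by simp
lemma vx9: "vx_ok LL 9" unfolding vx_ok_def Let_def star9 by simp
lemma vx10: "vx_ok LL 10" unfolding vx_ok_def Let_def star10 by simp
lemma vx11: "vx_ok LL 11" unfolding vx_ok_def Let_def star11 by simp
lemma vx12: "vx_ok LL 12" unfolding vx_ok_def Let_def star12 by simp
lemma vx13: "vx_ok LL 13" unfolding vx_ok_def Let_def star13 by simp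
lemma vx14: "vx_ok LL 14" unfolding vx_ok_def Let_def star14 by simp
lemma vx15: "vx_ok LL 15" unfolding vx_ok_def Let_def star15 by simp
lemma vx16: "vx_ok LL 16" unfolding vx_ok_def Let_def star16 by simp
lemma vx17: "vx_ok LL 17" unfolding vx_ok_def Let_def star17 by simp

lemma e: "[0..<18] = [0,1,2,3,4,5,6,7,8,9,10,11,12,13,14,15,16,17::nat]" by (simp add: upt_rec)
lemma blk: "list_all blk_ok LL" unfolding LL_def blk_ok_def by simp
lemma vxall: "list_all (vx_ok LL) [0..<18]" by (simp only: e list.pred_inject vx0 vx1 vx2 vx3 vx4 vx5 vx6 vx7 vx8 vx9 vx10 vx11 vx12 vx13 vx14 vx15 vx16 vx17 simp_thms)

lemma exists_decomp: "\<exists>B. is_decomp 18 {3,4} B"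
  using sound[OF blk vxall] by (rule exI)


lemma dc:
  fixes g :: "'a set \<Rightarrow> 'b::comm_semiring_1"
  assumes "finite A" "finite F"
  shows "(\<Sum>K\<in>F. of_nat (card (K \<inter> A)) * g K) = (\<Sum>a\<in>A. \<Sum>K\<in>{K\<in>F. a \<in> K}. g K)"
proof -
  have "(\<Sum>a\<in>A. \<Sum>K\<in>{K\<in>F. a \<in> K}. g K) = (\<Sum>a\<in>A. \<Sum>K\<in>F. if a \<in> K then g K else 0)"
    using assms by (simp add: sum.inter_filter)
  also have "\<dots> = (\<Sum>K\<in>F. \<Sum>a\<in>A. if a \<in> K then g K else 0)" by (rule sum.swap)
  also have "\<dots> = (\<Sum>K\<in>F. of_nat (card (K \<inter> A)) * g K)"
  proof (rule sum.cong)
    fix K assume "K \<in> F"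
    have "(\<Sum>a\<in>A. if a \<in> K then g K else 0) = (\<Sum>a\<in>{a\<in>A. a \<in> K}. g K)"
      using assms(1) by (rule sum.inter_filter[symmetric])
    also have "{a\<in>A. a \<in> K} = K \<inter> A" by blast
    finally show "(\<Sum>a\<in>A. if a \<in> K then g K else 0) = of_nat (card (K \<inter> A)) * g K" by simp
  qed simp
  finally show ?thesis by simp
qed

lemma sum_ind: "finite S \<Longrightarrow> (\<Sum>x\<in>S. if P x then 1 else 0) = (of_nat (card {x\<in>S. P x}) :: 'b::comm_semiring_1)"
  by (simp add: sum.inter_filter[symmetric])

locale dcp =
  fixes B :: "nat set set"
  assumes dec: "is_decomp 18 {3,4} B"
begin

abbreviation "V \<equiv> {..<18::nat}"

lemma sub: "b \<in> B \<Longrightarrow> b \<subseteq> V" using dec by (auto simp: is_decomp_def)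
lemma cardb: "b \<in> B \<Longrightarrow> card b = 3 \<or> card b = 4" using dec by (auto simp: is_decomp_def)
lemma finb: "b \<in> B \<Longrightarrow> finite b" using sub finite_subset by blast
lemma finB: "finite B"
proof -
  have "B \<subseteq> Pow V" using sub by blast
  thus ?thesis using finite_subset by blast
qed
lemma uniq: "b1 \<in> B \<Longrightarrow> b2 \<in> B \<Longrightarrow> x \<in> b1 \<Longrightarrow> y \<in> b1 \<Longrightarrow> x \<in> b2 \<Longrightarrow> y \<in> b2 \<Longrightarrow> x \<noteq> y \<Longrightarrow> b1 = b2"
proof -
  assume h: "b1 \<in> B" "b2 \<in> B" "x \<in> b1" "y \<in> b1" "x \<in> b2" "y \<in> b2" "x \<noteq> y"
  have "x < 18" "y < 18" using h sub by auto
  hence "\<exists>!b. b \<in> B \<and> x \<in> b \<and> y \<in> b" using dec h(7) unfolding is_decomp_def by blast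
  thus "b1 = b2" using h by blast
qed
lemma cover: assumes "x < 18" "y < 18" "x \<noteq> y" shows "\<exists>b\<in>B. x \<in> b \<and> y \<in> b"
proof -
  have h: "\<forall>x<18. \<forall>y<18. x \<noteq> y \<longrightarrow> (\<exists>!b. b \<in> B \<and> x \<in> b \<and> y \<in> b)"
    using dec unfolding is_decomp_def by (rule conjunct2)
  have "\<exists>!b. b \<in> B \<and> x \<in> b \<and> y \<in> b" using h[rule_format, OF assms] .
  then obtain b where "b \<in> B \<and> x \<in> b \<and> y \<in> b" by (rule ex1E)
  thus ?thesis by blast
qed

lemma starsum:
  assumes x: "x < 18" and S: "S \<subseteq> V"
  shows "(\<Sum>b\<in>{b\<in>B. x \<in> b}. card (b \<inter> S - {x})) = card (S - {x})"
proof -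
  have eq: "S - {x} = (\<Union>b\<in>{b\<in>B. x \<in> b}. b \<inter> S - {x})"
  proof
    show "S - {x} \<subseteq> (\<Union>b\<in>{b\<in>B. x \<in> b}. b \<inter> S - {x})"
    proof
      fix y assume y: "y \<in> S - {x}"
      hence "y < 18" using S by auto
      then obtain b where "b \<in> B" "x \<in> b" "y \<in> b" using cover[OF x] y by force
      thus "y \<in> (\<Union>b\<in>{b\<in>B. x \<in> b}. b \<inter> S - {x})" using y by blast
    qed
  qed blast
  have "card (\<Union>b\<in>{b\<in>B. x \<in> b}. b \<inter> S - {x}) = (\<Sum>b\<in>{b\<in>B. x \<in> b}. card (b \<inter> S - {x}))"
  proof (rule card_UN_disjoint)
    show "finite {b\<in>B. x \<in> b}" using finB by simp
    show "\<forall>b\<in>{b\<in>B. x \<in> b}. finite (b \<inter> S - {x})" using finb by blast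
    show "\<forall>i\<in>{b\<in>B. x \<in> b}. \<forall>j\<in>{b\<in>B. x \<in> b}. i \<noteq> j \<longrightarrow> (i \<inter> S - {x}) \<inter> (j \<inter> S - {x}) = {}"
      using uniq by blast
  qed
  thus ?thesis using eq by simp
qed

definition "T = {b\<in>B. card b = 3}"
definition "F = {b\<in>B. card b = 4}"
definition "tt x = card {b\<in>T. x \<in> b}"
definition "kk x = card {b\<in>F. x \<in> b}"

lemma finT: "finite T" and finF: "finite F" using finB by (auto simp: T_def F_def)
lemma cardB: "card B = card T + card F"
proof -
  have "B = T \<union> F" using cardb by (auto simp: T_def F_def)
  moreover have "T \<inter> F = {}" by (auto simp: T_def F_def)
  ultimately show ?thesis using finT finF card_Un_disjoint by metis
qed

lemma deg: assumes x: "x < 18" shows "2 * tt x + 3 * kk x = 17"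
proof -
  have "(\<Sum>b\<in>{b\<in>B. x \<in> b}. card (b \<inter> V - {x})) = card (V - {x})" by (rule starsum[OF x]) simp
  moreover have "card (V - {x}) = 17" using x by simp
  moreover have "(\<Sum>b\<in>{b\<in>B. x \<in> b}. card (b \<inter> V - {x})) = (\<Sum>b\<in>{b\<in>B. x \<in> b}. card b - 1)"
  proof (rule sum.cong)
    fix b assume "b \<in> {b\<in>B. x \<in> b}"
    hence "b \<inter> V = b" "x \<in> b" "finite b" using sub finb by auto
    thus "card (b \<inter> V - {x}) = card b - 1" by simp
  qed simp
  moreover have "{b\<in>B. x \<in> b} = {b\<in>T. x \<in> b} \<union> {b\<in>F. x \<in> b}" using cardb by (auto simp: T_def F_def)
  moreover have "{b\<in>T. x \<in> b} \<inter> {b\<in>F. x \<in> b} = {}" by (auto simp: T_def F_def)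
  moreover have "(\<Sum>b\<in>{b\<in>T. x \<in> b}. card b - 1) = 2 * tt x" by (simp add: T_def tt_def)
  moreover have "(\<Sum>b\<in>{b\<in>F. x \<in> b}. card b - 1) = 3 * kk x" by (simp add: F_def kk_def)
  ultimately show ?thesis using finT finF by (simp add: sum.union_disjoint)
qed

lemma sumtt: "(\<Sum>x\<in>V. tt x) = 3 * card T"
proof -
  have "(\<Sum>K\<in>T. of_nat (card (K \<inter> V)) * (1::nat)) = (\<Sum>a\<in>V. \<Sum>K\<in>{K\<in>T. a \<in> K}. 1)"
    by (rule dc) (auto simp: finT)
  moreover have "(\<Sum>K\<in>T. of_nat (card (K \<inter> V)) * (1::nat)) = (\<Sum>K\<in>T. 3)"
  proof (rule sum.cong)
    fix K assume "K \<in> T" thus "of_nat (card (K \<inter> V)) * (1::nat) = 3" using sub[of K] by (auto simp: T_def Int_absorb2)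
  qed simp
  ultimately show ?thesis by (simp add: tt_def)
qed

lemma sumkk: "(\<Sum>x\<in>V. kk x) = 4 * card F"
proof -
  have "(\<Sum>K\<in>F. of_nat (card (K \<inter> V)) * (1::nat)) = (\<Sum>a\<in>V. \<Sum>K\<in>{K\<in>F. a \<in> K}. 1)"
    by (rule dc) (auto simp: finF)
  moreover have "(\<Sum>K\<in>F. of_nat (card (K \<inter> V)) * (1::nat)) = (\<Sum>K\<in>F. 4)"
  proof (rule sum.cong)
    fix K assume "K \<in> F" thus "of_nat (card (K \<inter> V)) * (1::nat) = 4" using sub[of K] by (auto simp: F_def Int_absorb2)
  qed simp
  ultimately show ?thesis by (simp add: kk_def)
qed

lemma TF: "card T + 2 * card F = 51"
proof -
  have "(\<Sum>x\<in>V. 2 * tt x + 3 * kk x) = (\<Sum>x\<in>V. 17)" by (rule sum.cong) (auto simp: deg)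
  hence "2 * (\<Sum>x\<in>V. tt x) + 3 * (\<Sum>x\<in>V. kk x) = 306" by (simp add: sum.distrib sum_distrib_left)
  thus ?thesis using sumtt sumkk by simp
qed

lemma tt_pos: "x < 18 \<Longrightarrow> tt x = 1 \<or> tt x = 4 \<or> tt x = 7"
  using deg[of x] by presburger

lemma tt_ge1: "y < 18 \<Longrightarrow> tt y \<ge> 1" using tt_pos by fastforce
lemma tt_ge1': "y < 18 \<Longrightarrow> Suc 0 \<le> tt y" using tt_ge1 by simp

lemma seven:
  assumes "card T \<le> 7"
  shows "\<exists>x<18. tt x = 4 \<and> (\<forall>y<18. y \<noteq> x \<longrightarrow> tt y = 1) \<and> card T = 7"
proof -
  have odd: "odd (card T)" using TF by presburger
  have "\<exists>x<18. tt x \<noteq> 1"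
  proof (rule ccontr)
    assume "\<not> ?thesis"
    hence "(\<Sum>x\<in>V. tt x) = (\<Sum>x\<in>V. 1)" by (intro sum.cong) auto
    hence "3 * card T = 18" using sumtt by simp
    thus False using odd by presburger
  qed
  then obtain x where x: "x < 18" "tt x \<noteq> 1" by blast
  hence tx: "tt x \<ge> 4" using tt_pos by fastforce
  have xV: "x \<in> V" using x by simp
  have s1: "(\<Sum>y\<in>V. tt y) = tt x + (\<Sum>y\<in>V-{x}. tt y)" using sum.remove[OF _ xV] by simp
  have s2: "(\<Sum>y\<in>V-{x}. tt y) \<ge> (\<Sum>y\<in>V-{x}. 1)" by (rule sum_mono) (auto intro: tt_ge1')
  have c17: "card (V - {x}) = 17" using x by simp
  have tot: "tt x + (\<Sum>y\<in>V-{x}. tt y) \<le> 21" using s1 sumtt assms by simp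
  have rest: "\<forall>y<18. y \<noteq> x \<longrightarrow> tt y = 1"
  proof (intro allI impI, rule ccontr)
    fix y assume y: "y < 18" "y \<noteq> x" "tt y \<noteq> 1"
    hence ty: "tt y \<ge> 4" using tt_pos by fastforce
    have yV: "y \<in> V - {x}" using y by simp
    have "(\<Sum>z\<in>V-{x}. tt z) = tt y + (\<Sum>z\<in>V-{x}-{y}. tt z)" using sum.remove[OF _ yV] by simp
    moreover have "(\<Sum>z\<in>V-{x}-{y}. tt z) \<ge> (\<Sum>z\<in>V-{x}-{y}. 1)" by (rule sum_mono) (auto intro: tt_ge1')
    moreover have "card (V-{x}-{y}) = 16" using c17 yV by simp
    ultimately have "(\<Sum>z\<in>V-{x}. tt z) \<ge> 20" using ty by simp
    thus False using tot tx by simp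
  qed
  have "(\<Sum>y\<in>V-{x}. tt y) \<ge> 17" using s2 c17 by simp
  hence "tt x = 4" "3 * card T = 21" using tot tx s1 sumtt assms by simp_all
  thus ?thesis using x rest by auto
qed

end

locale dcp7 = dcp +
  fixes x :: nat
  assumes x: "x < 18" and ttx: "tt x = 4" and tty: "\<And>y. y < 18 \<Longrightarrow> y \<noteq> x \<Longrightarrow> tt y = 1"
    and cT: "card T = 7"
begin

lemma cF: "card F = 22" using TF cT by simp
lemma kkx: "kk x = 3" using deg[OF x] ttx by simp
lemma kky: "y < 18 \<Longrightarrow> y \<noteq> x \<Longrightarrow> kk y = 5" using deg[of y] tty[of y] by simp

definition "Tx = {b\<in>T. x \<in> b}"
definition "A = (\<Union>b\<in>Tx. b - {x})"
definition "C = V - {x} - A"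
definition "Fp = {K\<in>F. x \<notin> K}"

lemma cTx: "card Tx = 4" using ttx by (simp add: tt_def Tx_def)
lemma finTx: "finite Tx" using finT by (simp add: Tx_def)
lemma xA: "x \<notin> A" by (auto simp: A_def)
lemma AV: "A \<subseteq> V" using sub by (auto simp: A_def Tx_def T_def)
lemma cA: "card A = 8"
proof -
  have "card A = (\<Sum>b\<in>Tx. card (b - {x}))" unfolding A_def
  proof (rule card_UN_disjoint)
    show "finite Tx" by (rule finTx)
    show "\<forall>b\<in>Tx. finite (b - {x})" using finb by (auto simp: Tx_def T_def)
    show "\<forall>i\<in>Tx. \<forall>j\<in>Tx. i \<noteq> j \<longrightarrow> (i - {x}) \<inter> (j - {x}) = {}"
      using uniq unfolding Tx_def T_def by blast
  qed
  also have "\<dots> = (\<Sum>b\<in>Tx. 2)"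
  proof (rule sum.cong)
    fix b assume "b \<in> Tx" thus "card (b - {x}) = 2" using finb by (auto simp: Tx_def T_def)
  qed simp
  finally show ?thesis using cTx by simp
qed
lemma cC: "card C = 9"
proof -
  have "A \<subseteq> V - {x}" using AV xA by blast
  hence "card (V - {x} - A) = card (V - {x}) - card A" by (simp add: card_Diff_subset finite_subset)
  thus ?thesis using cA x by (simp add: C_def)
qed
lemma finFp: "finite Fp" using finF by (simp add: Fp_def)
lemma cFp: "card Fp = 19"
proof -
  have "F = Fp \<union> {K\<in>F. x \<in> K}" "Fp \<inter> {K\<in>F. x \<in> K} = {}" by (auto simp: Fp_def)
  hence "card F = card Fp + card {K\<in>F. x \<in> K}" using finF card_Un_disjoint
    by (metis (no_types, lifting) finite_Un)
  thus ?thesis using cF kkx by (simp add: kk_def)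
qed

lemma triA: assumes a: "a \<in> A" shows "\<exists>b0\<in>Tx. a \<in> b0 \<and> {b\<in>T. a \<in> b} = {b0}"
proof -
  obtain b0 where b0: "b0 \<in> Tx" "a \<in> b0" using a by (auto simp: A_def)
  have "a < 18" "a \<noteq> x" using a AV xA by auto
  hence "card {b\<in>T. a \<in> b} = 1" using tty by (simp add: tt_def)
  then obtain b1 where "{b\<in>T. a \<in> b} = {b1}" by (auto simp: card_1_singleton_iff)
  moreover have "b0 \<in> {b\<in>T. a \<in> b}" using b0 by (auto simp: Tx_def)
  ultimately show ?thesis using b0 by auto
qed

lemma card_rm: "finite X \<Longrightarrow> a \<in> X \<Longrightarrow> card X = Suc (card (X - {a}))"
  by (metis card.remove)

lemma PA: assumes a: "a \<in> A"
  shows "card {K\<in>Fp. a \<in> K} = 5" "(\<Sum>K\<in>{K\<in>Fp. a \<in> K}. card (K \<inter> A)) = 11"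
proof -
  obtain b0 where b0: "b0 \<in> Tx" "a \<in> b0" "{b\<in>T. a \<in> b} = {b0}" using triA[OF a] by blast
  have b0B: "b0 \<in> B" "card b0 = 3" "x \<in> b0" using b0 by (auto simp: Tx_def T_def)
  have ax: "a < 18" "a \<noteq> x" using a AV xA by auto
  have FF: "{K\<in>F. a \<in> K} = {K\<in>Fp. a \<in> K}"
  proof -
    have "x \<notin> K" if "K \<in> F" "a \<in> K" for K
    proof
      assume "x \<in> K"
      hence "K = b0" using uniq[of K b0 a x] that b0B b0 ax by (auto simp: F_def)
      thus False using that b0B by (auto simp: F_def)
    qed
    thus ?thesis by (auto simp: Fp_def)
  qed
  show c5: "card {K\<in>Fp. a \<in> K} = 5" using kky[OF ax] FF by (simp add: kk_def)
  have Ba: "{b\<in>B. a \<in> b} = insert b0 {K\<in>Fp. a \<in> K}"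
  proof -
    have "{b\<in>B. a \<in> b} = {b\<in>T. a \<in> b} \<union> {K\<in>F. a \<in> K}" using cardb by (auto simp: T_def F_def)
    thus ?thesis using b0(3) FF by simp
  qed
  have b0n: "b0 \<notin> {K\<in>Fp. a \<in> K}" using b0B by (auto simp: Fp_def)
  have "A \<subseteq> V" by (rule AV)
  have "(\<Sum>b\<in>{b\<in>B. a \<in> b}. card (b \<inter> A - {a})) = card (A - {a})" by (rule starsum[OF ax(1) AV])
  also have "card (A - {a}) = 7" using cA a by simp
  finally have st: "card (b0 \<inter> A - {a}) + (\<Sum>K\<in>{K\<in>Fp. a \<in> K}. card (K \<inter> A - {a})) = 7"
    using Ba b0n finFp by simp
  have "b0 \<inter> A = b0 - {x}" using b0(1) xA by (auto simp: A_def)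
  hence "card (b0 \<inter> A - {a}) = 1" using b0B b0(2) ax finb[OF b0B(1)] by simp
  hence s6: "(\<Sum>K\<in>{K\<in>Fp. a \<in> K}. card (K \<inter> A - {a})) = 6" using st by simp
  have "(\<Sum>K\<in>{K\<in>Fp. a \<in> K}. card (K \<inter> A)) = (\<Sum>K\<in>{K\<in>Fp. a \<in> K}. Suc (card (K \<inter> A - {a})))"
  proof (rule sum.cong)
    fix K assume K: "K \<in> {K\<in>Fp. a \<in> K}"
    hence "finite (K \<inter> A)" "a \<in> K \<inter> A" using finb a by (auto simp: Fp_def F_def)
    thus "card (K \<inter> A) = Suc (card (K \<inter> A - {a}))" by (rule card_rm)
  qed simp
  also have "\<dots> = 6 + 5" using s6 c5 by (simp add: sum_Suc)
  finally show "(\<Sum>K\<in>{K\<in>Fp. a \<in> K}. card (K \<inter> A)) = 11" by simp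
qed

lemma CA: "C \<inter> A = {}" by (auto simp: C_def)
lemma xC: "x \<notin> C" by (auto simp: C_def)

lemma PC: assumes c: "c \<in> C"
  shows "card {K\<in>Fp. c \<in> K} = 4" "(\<Sum>K\<in>{K\<in>Fp. c \<in> K}. card (K \<inter> C)) = 8"
proof -
  have cx: "c < 18" "c \<noteq> x" "c \<notin> A" using c by (auto simp: C_def)
  have "card {b\<in>T. c \<in> b} = 1" using tty[OF cx(1,2)] by (simp add: tt_def)
  then obtain bc where bc: "{b\<in>T. c \<in> b} = {bc}" by (auto simp: card_1_singleton_iff)
  hence bcB: "bc \<in> B" "card bc = 3" "c \<in> bc" by (auto simp: T_def)
  have xbc: "x \<notin> bc"
  proof
    assume "x \<in> bc"
    hence "bc \<in> Tx" using bcB by (auto simp: Tx_def T_def)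
    hence "c \<in> A" using bcB cx by (auto simp: A_def)
    thus False using cx by simp
  qed
  have bcA: "bc \<inter> A = {}"
  proof (rule ccontr)
    assume "bc \<inter> A \<noteq> {}"
    then obtain y where y: "y \<in> bc" "y \<in> A" by blast
    obtain b0 where b0: "b0 \<in> Tx" "y \<in> b0" "{b\<in>T. y \<in> b} = {b0}" using triA[OF y(2)] by blast
    have "bc \<in> {b\<in>T. y \<in> b}" using bcB y by (auto simp: T_def)
    hence "bc = b0" using b0 by simp
    thus False using b0(1) xbc by (auto simp: Tx_def)
  qed
  have "bc \<inter> C = bc" using sub[OF bcB(1)] xbc bcA by (auto simp: C_def)
  hence cbc: "card (bc \<inter> C - {c}) = 2" using bcB finb[OF bcB(1)] by simp
  obtain Kc where Kc: "Kc \<in> B" "x \<in> Kc" "c \<in> Kc" using cover[OF x cx(1)] cx(2) by metis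
  have KcT: "Kc \<notin> T"
  proof
    assume "Kc \<in> T"
    hence "Kc \<in> Tx" using Kc by (simp add: Tx_def)
    hence "c \<in> A" using Kc cx by (auto simp: A_def)
    thus False using cx by simp
  qed
  hence KcF: "Kc \<in> F" "card Kc = 4" using Kc cardb by (auto simp: T_def F_def)
  have KcA: "Kc \<inter> A = {}"
  proof (rule ccontr)
    assume "Kc \<inter> A \<noteq> {}"
    then obtain y where y: "y \<in> Kc" "y \<in> A" by blast
    obtain b0 where b0: "b0 \<in> Tx" "y \<in> b0" using triA[OF y(2)] by blast
    have "y \<noteq> x" using y xA by auto
    hence "Kc = b0" using uniq[of Kc b0 x y] Kc y b0 by (auto simp: Tx_def T_def)
    thus False using b0 KcF by (auto simp: Tx_def T_def)
  qed
  have "Kc \<inter> C = Kc - {x}" using sub[OF Kc(1)] KcA by (auto simp: C_def)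
  hence cKc: "card (Kc \<inter> C - {c}) = 2" using KcF Kc cx finb[OF Kc(1)] by simp
  have FF: "{K\<in>F. c \<in> K} = insert Kc {K\<in>Fp. c \<in> K}"
  proof -
    have kk1: "K = Kc" if "K \<in> F" "c \<in> K" "x \<in> K" for K
      using uniq[of K Kc x c] that Kc cx by (auto simp: F_def)
    show ?thesis
    proof (intro equalityI subsetI)
      fix K assume K: "K \<in> {K\<in>F. c \<in> K}"
      show "K \<in> insert Kc {K\<in>Fp. c \<in> K}"
      proof (cases "x \<in> K")
        case True thus ?thesis using kk1[of K] K by simp
      next
        case False thus ?thesis using K by (simp add: Fp_def)
      qed
    next
      fix K assume "K \<in> insert Kc {K\<in>Fp. c \<in> K}"
      thus "K \<in> {K\<in>F. c \<in> K}" using KcF(1) Kc(3) by (auto simp: Fp_def)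
    qed
  qed
  have Kcn: "Kc \<notin> {K\<in>Fp. c \<in> K}" using Kc by (simp add: Fp_def)
  have "card {K\<in>F. c \<in> K} = 5" using kky[OF cx(1,2)] by (simp add: kk_def)
  hence c4: "card {K\<in>Fp. c \<in> K} = 4" using FF Kcn finFp by simp
  show "card {K\<in>Fp. c \<in> K} = 4" by (rule c4)
  have Bc: "{b\<in>B. c \<in> b} = insert bc (insert Kc {K\<in>Fp. c \<in> K})"
  proof -
    have "{b\<in>B. c \<in> b} = {b\<in>T. c \<in> b} \<union> {K\<in>F. c \<in> K}" using cardb by (auto simp: T_def F_def)
    thus ?thesis using bc FF by (simp add: insert_commute)
  qed
  have bcn: "bc \<notin> insert Kc {K\<in>Fp. c \<in> K}" using bcB KcF by (auto simp: Fp_def F_def)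
  have CV: "C \<subseteq> V" by (auto simp: C_def)
  have "(\<Sum>b\<in>{b\<in>B. c \<in> b}. card (b \<inter> C - {c})) = card (C - {c})" by (rule starsum[OF cx(1) CV])
  also have "card (C - {c}) = 8" using cC c by simp
  finally have st: "card (bc \<inter> C - {c}) + (card (Kc \<inter> C - {c}) + (\<Sum>K\<in>{K\<in>Fp. c \<in> K}. card (K \<inter> C - {c}))) = 8"
    using Bc bcn Kcn finFp by simp
  hence s4: "(\<Sum>K\<in>{K\<in>Fp. c \<in> K}. card (K \<inter> C - {c})) = 4" using cbc cKc by simp
  have "(\<Sum>K\<in>{K\<in>Fp. c \<in> K}. card (K \<inter> C)) = (\<Sum>K\<in>{K\<in>Fp. c \<in> K}. Suc (card (K \<inter> C - {c})))"
  proof (rule sum.cong)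
    fix K assume K: "K \<in> {K\<in>Fp. c \<in> K}"
    hence "finite (K \<inter> C)" "c \<in> K \<inter> C" using finb c by (auto simp: Fp_def F_def)
    thus "card (K \<inter> C) = Suc (card (K \<inter> C - {c}))" by (rule card_rm)
  qed simp
  also have "\<dots> = 4 + 4" using s4 c4 by (simp add: sum_Suc)
  finally show "(\<Sum>K\<in>{K\<in>Fp. c \<in> K}. card (K \<inter> C)) = 8" by simp
qed

lemma split4: assumes K: "K \<in> Fp" shows "card (K \<inter> A) + card (K \<inter> C) = 4"
proof -
  have KB: "K \<in> B" "card K = 4" "x \<notin> K" using K by (auto simp: Fp_def F_def)
  have "K = (K \<inter> A) \<union> (K \<inter> C)" using sub[OF KB(1)] KB(3) by (auto simp: C_def)
  moreover have "(K \<inter> A) \<inter> (K \<inter> C) = {}" using CA by blast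
  moreover have "finite K" using finb[OF KB(1)] .
  ultimately have "card K = card (K \<inter> A) + card (K \<inter> C)"
    by (metis card_Un_disjoint finite_Int)
  thus ?thesis using KB by simp
qed

lemma finA: "finite A" using AV finite_subset by blast

lemma sumA1: "(\<Sum>K\<in>Fp. card (K \<inter> A)) = 40"
proof -
  have "(\<Sum>K\<in>Fp. of_nat (card (K \<inter> A)) * (1::nat)) = (\<Sum>a\<in>A. \<Sum>K\<in>{K\<in>Fp. a \<in> K}. 1)"
    by (rule dc[OF finA finFp])
  also have "\<dots> = (\<Sum>a\<in>A. 5)" by (rule sum.cong) (auto simp: PA)
  finally show ?thesis using cA by simp
qed

lemma sumA2: "(\<Sum>K\<in>Fp. card (K \<inter> A) * card (K \<inter> A)) = 88"
proof -
  have "(\<Sum>K\<in>Fp. of_nat (card (K \<inter> A)) * card (K \<inter> A)) = (\<Sum>a\<in>A. \<Sum>K\<in>{K\<in>Fp. a \<in> K}. card (K \<inter> A))"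
    by (rule dc[OF finA finFp])
  also have "\<dots> = (\<Sum>a\<in>A. 11)" by (rule sum.cong) (auto simp: PA)
  finally show ?thesis using cA by simp
qed

definition "d K = int (card (K \<inter> A)) - 2"

lemma Sd: "(\<Sum>K\<in>Fp. d K) = 2"
proof -
  have "(\<Sum>K\<in>Fp. d K) = (\<Sum>K\<in>Fp. int (card (K \<inter> A))) - (\<Sum>K\<in>Fp. 2)"
    by (simp add: d_def sum_subtractf)
  also have "(\<Sum>K\<in>Fp. int (card (K \<inter> A))) = 40" unfolding of_nat_sum[symmetric] sumA1 by simp
  finally show ?thesis using cFp by simp
qed

lemma Sd2: "(\<Sum>K\<in>Fp. d K * d K) = 4"
proof -
  have "(\<Sum>K\<in>Fp. d K * d K) = (\<Sum>K\<in>Fp. int (card (K \<inter> A) * card (K \<inter> A))) - 4 * (\<Sum>K\<in>Fp. int (card (K \<inter> A))) + (\<Sum>K\<in>Fp. 4)"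
    by (simp add: d_def sum_subtractf sum.distrib sum_distrib_left algebra_simps)
  also have "(\<Sum>K\<in>Fp. int (card (K \<inter> A))) = 40" unfolding of_nat_sum[symmetric] sumA1 by simp
  also have "(\<Sum>K\<in>Fp. int (card (K \<inter> A) * card (K \<inter> A))) = 88" unfolding of_nat_sum[symmetric] sumA2 by simp
  finally show ?thesis using cFp by simp
qed

lemma dA: assumes a: "a \<in> A" shows "(\<Sum>K\<in>{K\<in>Fp. a \<in> K}. d K) = 1"
proof -
  have f: "finite {K\<in>Fp. a \<in> K}" using finFp by simp
  have "(\<Sum>K\<in>{K\<in>Fp. a \<in> K}. d K) = (\<Sum>K\<in>{K\<in>Fp. a \<in> K}. int (card (K \<inter> A))) - (\<Sum>K\<in>{K\<in>Fp. a \<in> K}. 2)"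
    by (simp add: d_def sum_subtractf)
  also have "(\<Sum>K\<in>{K\<in>Fp. a \<in> K}. int (card (K \<inter> A))) = 11" unfolding of_nat_sum[symmetric] PA(2)[OF a] by simp
  finally show ?thesis using PA(1)[OF a] by simp
qed

lemma dC: assumes c: "c \<in> C" shows "(\<Sum>K\<in>{K\<in>Fp. c \<in> K}. d K) = 0"
proof -
  have "(\<Sum>K\<in>{K\<in>Fp. c \<in> K}. d K) = (\<Sum>K\<in>{K\<in>Fp. c \<in> K}. 2 - int (card (K \<inter> C)))"
  proof (rule sum.cong)
    fix K assume "K \<in> {K\<in>Fp. c \<in> K}"
    thus "d K = 2 - int (card (K \<inter> C))" using split4[of K] by (simp add: d_def)
  qed simp
  also have "\<dots> = (\<Sum>K\<in>{K\<in>Fp. c \<in> K}. 2) - (\<Sum>K\<in>{K\<in>Fp. c \<in> K}. int (card (K \<inter> C)))"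
    by (simp add: sum_subtractf)
  also have "(\<Sum>K\<in>{K\<in>Fp. c \<in> K}. int (card (K \<inter> C))) = 8" unfolding of_nat_sum[symmetric] PC(2)[OF c] by simp
  finally show ?thesis using PC(1)[OF c] by simp
qed

lemma drange: "K \<in> Fp \<Longrightarrow> -2 \<le> d K \<and> d K \<le> 2"
  using split4[of K] by (simp add: d_def)

lemma rest_zero:
  assumes K1: "K1 \<in> Fp" "d K1 * d K1 = 4"
  shows "\<forall>K\<in>Fp - {K1}. d K = 0"
proof -
  have "(\<Sum>K\<in>Fp. d K * d K) = d K1 * d K1 + (\<Sum>K\<in>Fp - {K1}. d K * d K)"
    using sum.remove[OF finFp K1(1)] by simp
  hence "(\<Sum>K\<in>Fp - {K1}. d K * d K) = 0" using Sd2 K1 by simp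
  hence "\<forall>K\<in>Fp - {K1}. d K * d K = 0" using finFp by (subst (asm) sum_nonneg_eq_0_iff) auto
  thus ?thesis by simp
qed

lemma contra: False
proof (cases "\<exists>K1\<in>Fp. d K1 = 2 \<or> d K1 = -2")
  case True
  then obtain K1 where K1: "K1 \<in> Fp" "d K1 = 2 \<or> d K1 = -2" by blast
  have "d K1 * d K1 = 4" using K1(2) by auto
  hence rz: "\<forall>K\<in>Fp - {K1}. d K = 0" using rest_zero[OF K1(1)] by blast
  have "(\<Sum>K\<in>Fp. d K) = d K1 + (\<Sum>K\<in>Fp - {K1}. d K)" using sum.remove[OF finFp K1(1)] by simp
  also have "(\<Sum>K\<in>Fp - {K1}. d K) = 0" using rz by simp
  finally have "d K1 = 2" using Sd by simp
  hence "card (K1 \<inter> A) = 4" by (simp add: d_def)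
  have "\<not> A \<subseteq> K1"
  proof
    assume "A \<subseteq> K1"
    hence "K1 \<inter> A = A" by blast
    thus False using \<open>card (K1 \<inter> A) = 4\<close> cA by simp
  qed
  then obtain a where a: "a \<in> A" "a \<notin> K1" by blast
  have "(\<Sum>K\<in>{K\<in>Fp. a \<in> K}. d K) = 0" using rz a by (intro sum.neutral) auto
  thus False using dA[OF a(1)] by simp
next
  case False
  hence r1: "\<forall>K\<in>Fp. d K = -1 \<or> d K = 0 \<or> d K = 1" using drange by force
  let ?P = "{K\<in>Fp. d K = 1}" and ?N = "{K\<in>Fp. d K = -1}"
  have "(\<Sum>K\<in>Fp. d K) = (\<Sum>K\<in>Fp. (if d K = 1 then 1 else 0) - (if d K = -1 then 1 else 0))"
    by (rule sum.cong) (use r1 in auto)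
  also have "\<dots> = int (card ?P) - int (card ?N)" using finFp by (simp add: sum_subtractf sum_ind)
  finally have e1: "int (card ?P) - int (card ?N) = 2" using Sd by simp
  have "(\<Sum>K\<in>Fp. d K * d K) = (\<Sum>K\<in>Fp. (if d K = 1 then 1 else 0) + (if d K = -1 then 1 else 0))"
    by (rule sum.cong) (use r1 in auto)
  also have "\<dots> = int (card ?P) + int (card ?N)" using finFp by (simp add: sum.distrib sum_ind)
  finally have e2: "int (card ?P) + int (card ?N) = 4" using Sd2 by simp
  have "card ?N = 1" using e1 e2 by simp
  then obtain K0 where K0: "?N = {K0}" by (auto simp: card_1_singleton_iff)
  hence K0F: "K0 \<in> Fp" "d K0 = -1" by auto
  hence "card (K0 \<inter> A) = 1" by (simp add: d_def)
  then obtain a0 where a0: "K0 \<inter> A = {a0}" by (auto simp: card_1_singleton_iff)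
  hence a0A: "a0 \<in> A" "a0 \<in> K0" by auto
  have fa: "finite {K\<in>Fp. a0 \<in> K}" using finFp by simp
  have K0a: "K0 \<in> {K\<in>Fp. a0 \<in> K}" using K0F a0A by simp
  have "\<exists>K1\<in>{K\<in>Fp. a0 \<in> K} - {K0}. d K1 > 0"
  proof (rule ccontr)
    assume "\<not> ?thesis"
    hence "\<forall>K\<in>{K\<in>Fp. a0 \<in> K} - {K0}. d K \<le> 0" by (meson not_less)
    hence "(\<Sum>K\<in>{K\<in>Fp. a0 \<in> K} - {K0}. d K) \<le> 0" by (intro sum_nonpos) blast
    moreover have "(\<Sum>K\<in>{K\<in>Fp. a0 \<in> K}. d K) = d K0 + (\<Sum>K\<in>{K\<in>Fp. a0 \<in> K} - {K0}. d K)"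
      using sum.remove[OF fa K0a] by simp
    ultimately show False using dA[OF a0A(1)] K0F by simp
  qed
  then obtain K1 where K1: "K1 \<in> Fp" "a0 \<in> K1" "K1 \<noteq> K0" "d K1 > 0" by blast
  hence "d K1 = 1" using r1 by force
  hence "card (K1 \<inter> A) = 3" by (simp add: d_def)
  hence "card (K1 \<inter> C) = 1" using split4[OF K1(1)] by simp
  then obtain c1 where c1: "K1 \<inter> C = {c1}" by (auto simp: card_1_singleton_iff)
  hence c1C: "c1 \<in> C" "c1 \<in> K1" by auto
  have fc: "finite {K\<in>Fp. c1 \<in> K}" using finFp by simp
  have K1c: "K1 \<in> {K\<in>Fp. c1 \<in> K}" using K1 c1C by simp
  have "\<exists>K2\<in>{K\<in>Fp. c1 \<in> K} - {K1}. d K2 < 0"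
  proof (rule ccontr)
    assume "\<not> ?thesis"
    hence "\<forall>K\<in>{K\<in>Fp. c1 \<in> K} - {K1}. 0 \<le> d K" by (meson not_less)
    hence "(\<Sum>K\<in>{K\<in>Fp. c1 \<in> K} - {K1}. d K) \<ge> 0" by (intro sum_nonneg) blast
    moreover have "(\<Sum>K\<in>{K\<in>Fp. c1 \<in> K}. d K) = d K1 + (\<Sum>K\<in>{K\<in>Fp. c1 \<in> K} - {K1}. d K)"
      using sum.remove[OF fc K1c] by simp
    ultimately show False using dC[OF c1C(1)] \<open>d K1 = 1\<close> by simp
  qed
  then obtain K2 where K2: "K2 \<in> Fp" "c1 \<in> K2" "d K2 < 0" by blast
  hence "d K2 = -1" using r1 by force
  hence "K2 = K0" using K0 K2 by blast
  hence c1K0: "c1 \<in> K0" using K2 by simp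
  have "a0 \<noteq> c1" using a0A c1C CA by blast
  moreover have "K0 \<in> B" "K1 \<in> B" using K0F K1 by (auto simp: Fp_def F_def)
  ultimately have "K0 = K1" using uniq[of K0 K1 a0 c1] a0A c1K0 K1 c1C by blast
  thus False using K1 by simp
qed

end

lemma (in dcp) lower: "card B \<ge> 30"
proof (rule ccontr)
  assume "\<not> card B \<ge> 30"
  hence "card T \<le> 7" using cardB TF by simp
  then obtain x where "x < 18" "tt x = 4" "\<forall>y<18. y \<noteq> x \<longrightarrow> tt y = 1" "card T = 7" using seven by blast
  hence "dcp7 B x" by unfold_locales auto
  thus False using dcp7.contra by blast
qed


theorem mainTheorem4:
  shows "D 18 {3, 4} \<ge> 30"
proof -
  obtain B0 where "is_decomp 18 {3,4} B0" using exists_decomp by blast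
  hence ne: "card ` {B. is_decomp 18 {3,4} B} \<noteq> {}" by blast
  have "\<And>n. n \<in> card ` {B. is_decomp 18 {3,4} B} \<Longrightarrow> 30 \<le> n"
  proof -
    fix n assume "n \<in> card ` {B. is_decomp 18 {3,4} B}"
    then obtain B where "is_decomp 18 {3,4} B" "n = card B" by blast
    thus "30 \<le> n" using dcp.lower[of B] by (simp add: dcp_def)
  qed
  hence "30 \<le> Inf (card ` {B. is_decomp 18 {3,4} B})" using ne by (intro cInf_greatest) auto
  thus ?thesis by (simp add: D_def)
qed

end
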